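(* Let $k,l\ge1$ with $k\ne l$, $1\le r\le4kl$, and let $\overline{\mathcal{B}}(2k,2l;r)$ be the set of boards in $\mathcal{B}(2k,2l;r)$ whose board partition $(\lambda_1,\lambda_2,\lambda_3,\lambda_4)$ satisfies: $\lambda_1\ge\lambda_i$ for all $i>1$; if $\lambda_1=\lambda_2$ then $\lambda_3\ge\lambda_4$; if $\lambda_1=\lambda_3$ then $\lambda_2\ge\lambda_4$; if $\lambda_1=\lambda_4$ then $\lambda_2\ge\lambda_3$. For a board partition of a board in $\overline{\mathcal{B}}(2k,2l;r)$, let $K\le\langle H,V\rangle$ be the subgroup of symmetries preserving the set of all boards with that board partition. Then: if $\lambda_1=\lambda_2=\lambda_3=\lambda_4$, $K=\langle H,V\rangle$ and $[\langle H,V\rangle:K]=1$; if $\lambda_1=\lambda_2>\lambda_3=\lambda_4$, $K=\langle V\rangle$ and the index is 2; if $\lambda_1=\lambda_3>\lambda_2=\lambda_4$, $K=\langle R_{180}\rangle$ and the index is 2; if $\lambda_1=\lambda_4>\lambda_2=\lambda_3$, $K=\langle H\rangle$ and the index is 2; in all other cases $K$ is trivial and the index is 4.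
   Context: A $2k\times2l$ grid ($2k$ rows numbered top to bottom, $2l$ columns left to right); $\mathcal{B}(2k,2l;r)$ is the set of boards, i.e. subsets of exactly $r$ blocked cells. $\langle H,V\rangle=\{R_0,H,V,R_{180}\}$ acts on boards, where $H$ is reflection across the horizontal midline (swapping top and bottom), $V$ reflection across the vertical midline (swapping left and right), $R_{180}$ the 180-degree rotation. Quadrants: $Q_1$ = rows $1..k$, cols $1..l$; $Q_2$ = rows $1..k$, cols $l+1..2l$; $Q_3$ = rows $k+1..2k$, cols $l+1..2l$; $Q_4$ = rows $k+1..2k$, cols $1..l$; the board partition is $(\lambda_1,\dots,\lambda_4)$ with $\lambda_i$ the number of blocked cells in $Q_i$. *)

theory Defs
  imports Main
begin

text \<open>Cells of the 2k x 2l grid are pairs (row, column), rows 1..2k (top to bottom),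
 columns 1..2l (left to right).\<close>

definition grid :: "nat \<Rightarrow> nat \<Rightarrow> (nat \<times> nat) set" where
  "grid k l = {1..2*k} \<times> {1..2*l}"

definition boards :: "nat \<Rightarrow> nat \<Rightarrow> nat \<Rightarrow> (nat \<times> nat) set set" where
  "boards k l r = {B. B \<subseteq> grid k l \<and> card B = r}"

datatype sym = R0 | H | V | R180

fun act :: "nat \<Rightarrow> nat \<Rightarrow> sym \<Rightarrow> nat \<times> nat \<Rightarrow> nat \<times> nat" where
  "act k l R0 (i, j) = (i, j)"
| "act k l H (i, j) = (2*k + 1 - i, j)"
| "act k l V (i, j) = (i, 2*l + 1 - j)"
| "act k l R180 (i, j) = (2*k + 1 - i, 2*l + 1 - j)"

definition act_board :: "nat \<Rightarrow> nat \<Rightarrow> sym \<Rightarrow> (nat \<times> nat) set \<Rightarrow> (nat \<times> nat) set" where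
  "act_board k l g B = act k l g ` B"

fun quadrant :: "nat \<Rightarrow> nat \<Rightarrow> nat \<Rightarrow> (nat \<times> nat) set" where
  "quadrant k l (Suc 0) = {1..k} \<times> {1..l}"
| "quadrant k l (Suc (Suc 0)) = {1..k} \<times> {l+1..2*l}"
| "quadrant k l (Suc (Suc (Suc 0))) = {k+1..2*k} \<times> {l+1..2*l}"
| "quadrant k l (Suc (Suc (Suc (Suc 0)))) = {k+1..2*k} \<times> {1..l}"
| "quadrant k l _ = {}"

definition board_partition :: "nat \<Rightarrow> nat \<Rightarrow> (nat \<times> nat) set \<Rightarrow> nat \<Rightarrow> nat" where
  "board_partition k l B i = card (B \<inter> quadrant k l i)"

definition boards_bar :: "nat \<Rightarrow> nat \<Rightarrow> nat \<Rightarrow> (nat \<times> nat) set set" where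
  "boards_bar k l r = {B \<in> boards k l r.
     let lam = board_partition k l B in
       (\<forall>i\<in>{2,3,4}. lam 1 \<ge> lam i)
     \<and> (lam 1 = lam 2 \<longrightarrow> lam 3 \<ge> lam 4)
     \<and> (lam 1 = lam 3 \<longrightarrow> lam 2 \<ge> lam 4)
     \<and> (lam 1 = lam 4 \<longrightarrow> lam 2 \<ge> lam 3)}"

definition boards_with_partition ::
  "nat \<Rightarrow> nat \<Rightarrow> nat \<Rightarrow> (nat \<Rightarrow> nat) \<Rightarrow> (nat \<times> nat) set set" where
  "boards_with_partition k l r lam =
     {B \<in> boards k l r. \<forall>i\<in>{1,2,3,4}. board_partition k l B i = lam i}"

definition stab :: "nat \<Rightarrow> nat \<Rightarrow> nat \<Rightarrow> (nat \<Rightarrow> nat) \<Rightarrow> sym set" where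
  "stab k l r lam = {g. act_board k l g ` boards_with_partition k l r lam
                       = boards_with_partition k l r lam}"

definition hv_index :: "sym set \<Rightarrow> nat" where
  "hv_index K = card (UNIV :: sym set) div card K"

end

theory Submission
  imports Defs
begin

fun perm :: "sym \<Rightarrow> nat \<Rightarrow> nat" where
  "perm R0 i = i"
| "perm H i = (if i = 1 then 4 else if i = 4 then 1 else if i = 2 then 3 else if i = 3 then 2 else i)"
| "perm V i = (if i = 1 then 2 else if i = 2 then 1 else if i = 3 then 4 else if i = 4 then 3 else i)"
| "perm R180 i = (if i = 1 then 3 else if i = 3 then 1 else if i = 2 then 4 else if i = 4 then 2 else i)"

lemma act_grid: "p \<in> grid k l \<Longrightarrow> act k l g p \<in> grid k l"
  by (cases g; cases p) (auto simp: grid_def)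

lemma act_invol: "p \<in> grid k l \<Longrightarrow> act k l g (act k l g p) = p"
  by (cases g; cases p) (auto simp: grid_def)

lemma act_inj: "inj_on (act k l g) (grid k l)"
  by (metis act_invol inj_onI)

lemma quad_iff:
  assumes "p \<in> grid k l" "i \<in> {1,2,3,4}"
  shows "act k l g p \<in> quadrant k l i \<longleftrightarrow> p \<in> quadrant k l (perm g i)"
  using assms
  by (cases g; cases p) (auto simp: grid_def numeral_eq_Suc)

lemma part_act:
  assumes "B \<subseteq> grid k l" "i \<in> {1,2,3,4}"
  shows "board_partition k l (act_board k l g B) i = board_partition k l B (perm g i)"
proof -
  have qi: "act k l g p \<in> quadrant k l i \<longleftrightarrow> p \<in> quadrant k l (perm g i)" if "p \<in> B" for p
    using quad_iff[OF _ assms(2)] assms(1) that by (meson subsetD)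
  have "act_board k l g B \<inter> quadrant k l i = act k l g ` (B \<inter> quadrant k l (perm g i))"
    unfolding act_board_def using qi by auto
  moreover have "inj_on (act k l g) (B \<inter> quadrant k l (perm g i))"
    using inj_on_subset[OF act_inj] assms(1) by (meson inf.coboundedI1)
  ultimately show ?thesis unfolding board_partition_def by (simp add: card_image)
qed

lemma boards_act: "B \<in> boards k l r \<Longrightarrow> act_board k l g B \<in> boards k l r"
proof -
  assume b: "B \<in> boards k l r"
  then have g: "B \<subseteq> grid k l" and c: "card B = r" unfolding boards_def by auto
  have "act_board k l g B \<subseteq> grid k l" using act_grid g unfolding act_board_def by blast
  moreover have "card (act_board k l g B) = r"
    unfolding act_board_def using card_image[OF inj_on_subset[OF act_inj g]] c by simp
  ultimately show ?thesis unfolding boards_def by simp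
qed

lemma invol_board: "B \<subseteq> grid k l \<Longrightarrow> act_board k l g (act_board k l g B) = B"
proof -
  assume g: "B \<subseteq> grid k l"
  have "act_board k l g (act_board k l g B) = (\<lambda>p. act k l g (act k l g p)) ` B"
    unfolding act_board_def image_image ..
  also have "\<dots> = (\<lambda>p. p) ` B"
    by (rule image_cong) (use g act_invol in auto)
  finally show ?thesis by simp
qed

lemma perm_in: "i \<in> {1,2,3,4} \<Longrightarrow> perm g i \<in> {1,2,3,4}"
  by (cases g) auto

lemma perm_invol: "i \<in> {1,2,3,4} \<Longrightarrow> perm g (perm g i) = i"
  by (cases g) auto

lemma stab_iff:
  assumes "B \<in> boards_with_partition k l r lam"
  shows "g \<in> stab k l r lam \<longleftrightarrow> (\<forall>i\<in>{1,2,3,4}. lam (perm g i) = lam i)"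
proof
  assume "g \<in> stab k l r lam"
  then have "act_board k l g B \<in> boards_with_partition k l r lam"
    using assms unfolding stab_def by blast
  then have p1: "\<forall>i\<in>{1,2,3,4}. board_partition k l (act_board k l g B) i = lam i"
    unfolding boards_with_partition_def by blast
  have p0: "\<forall>i\<in>{1,2,3,4}. board_partition k l B i = lam i" and g: "B \<subseteq> grid k l"
    using assms unfolding boards_with_partition_def boards_def by auto
  show "\<forall>i\<in>{1,2,3,4}. lam (perm g i) = lam i"
  proof
    fix i :: nat assume i: "i \<in> {1,2,3,4}"
    have "lam i = board_partition k l (act_board k l g B) i" using p1 i by (metis (no_types))
    also have "\<dots> = board_partition k l B (perm g i)" by (rule part_act[OF g i])
    also have "\<dots> = lam (perm g i)" using p0 perm_in[OF i] by blast
    finally show "lam (perm g i) = lam i" by simp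
  qed
next
  assume h: "\<forall>i\<in>{1,2,3,4}. lam (perm g i) = lam i"
  have sub: "act_board k l g B' \<in> boards_with_partition k l r lam"
    if "B' \<in> boards_with_partition k l r lam" for B'
  proof -
    have b: "B' \<in> boards k l r" and p: "\<forall>i\<in>{1,2,3,4}. board_partition k l B' i = lam i"
      using that unfolding boards_with_partition_def by auto
    have g: "B' \<subseteq> grid k l" using b unfolding boards_def by auto
    have "\<forall>i\<in>{1,2,3,4}. board_partition k l (act_board k l g B') i = lam i"
    proof
      fix i :: nat assume i: "i \<in> {1,2,3,4}"
      have "board_partition k l (act_board k l g B') i = board_partition k l B' (perm g i)"
        by (rule part_act[OF g i])
      also have "\<dots> = lam (perm g i)" using p perm_in[OF i] by blast
      also have "\<dots> = lam i" using h i by blast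
      finally show "board_partition k l (act_board k l g B') i = lam i" .
    qed
    then show ?thesis unfolding boards_with_partition_def using boards_act[OF b] by blast
  qed
  have "boards_with_partition k l r lam \<subseteq> act_board k l g ` boards_with_partition k l r lam"
  proof
    fix B' assume a: "B' \<in> boards_with_partition k l r lam"
    have "B' \<subseteq> grid k l" using a unfolding boards_with_partition_def boards_def by auto
    then have "B' = act_board k l g (act_board k l g B')" by (simp add: invol_board)
    then show "B' \<in> act_board k l g ` boards_with_partition k l r lam" using sub[OF a] by blast
  qed
  then show "g \<in> stab k l r lam" unfolding stab_def using sub by blast
qed

lemma UNIV_sym: "(UNIV :: sym set) = {R0, H, V, R180}"
  using sym.exhaust by auto

lemma hvv: "hv_index {R0, H, V, R180} = 1" "hv_index {R0, V} = 2" "hv_index {R0, R180} = 2"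
  "hv_index {R0, H} = 2" "hv_index {R0} = 4"
proof -
  have c4: "card (UNIV :: sym set) = 4" unfolding UNIV_sym by simp
  have a: "card {R0, V} = 2" "card {R0, R180} = 2" "card {R0, H} = 2" "card {R0, H, V, R180} = 4"
    by simp_all
  show "hv_index {R0, H, V, R180} = 1" "hv_index {R0, V} = 2" "hv_index {R0, R180} = 2"
    "hv_index {R0, H} = 2" "hv_index {R0} = 4"
    unfolding hv_index_def c4 a by simp_all
qed

theorem corollary4p6:
  fixes k l r :: nat and B :: "(nat \<times> nat) set"
  assumes "k \<ge> 1" and "l \<ge> 1" and "k \<noteq> l" and "1 \<le> r" and "r \<le> 4*k*l"
    and "B \<in> boards_bar k l r"
  defines "lam \<equiv> board_partition k l B"
  defines "K \<equiv> stab k l r lam"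
  shows "(lam 1 = lam 2 \<and> lam 2 = lam 3 \<and> lam 3 = lam 4
            \<longrightarrow> K = {R0, H, V, R180} \<and> hv_index K = 1)
       \<and> (lam 1 = lam 2 \<and> lam 2 > lam 3 \<and> lam 3 = lam 4
            \<longrightarrow> K = {R0, V} \<and> hv_index K = 2)
       \<and> (lam 1 = lam 3 \<and> lam 3 > lam 2 \<and> lam 2 = lam 4
            \<longrightarrow> K = {R0, R180} \<and> hv_index K = 2)
       \<and> (lam 1 = lam 4 \<and> lam 4 > lam 2 \<and> lam 2 = lam 3
            \<longrightarrow> K = {R0, H} \<and> hv_index K = 2)
       \<and> (\<not> (lam 1 = lam 2 \<and> lam 2 = lam 3 \<and> lam 3 = lam 4)
          \<and> \<not> (lam 1 = lam 2 \<and> lam 2 > lam 3 \<and> lam 3 = lam 4)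
          \<and> \<not> (lam 1 = lam 3 \<and> lam 3 > lam 2 \<and> lam 2 = lam 4)
          \<and> \<not> (lam 1 = lam 4 \<and> lam 4 > lam 2 \<and> lam 2 = lam 3)
            \<longrightarrow> K = {R0} \<and> hv_index K = 4)"
proof -
  have Bb: "B \<in> boards_with_partition k l r lam"
    using assms(6) unfolding boards_bar_def boards_with_partition_def lam_def by auto
  have c: "lam 1 \<ge> lam 2" "lam 1 \<ge> lam 3" "lam 1 \<ge> lam 4"
    "lam 1 = lam 2 \<longrightarrow> lam 3 \<ge> lam 4"
    "lam 1 = lam 3 \<longrightarrow> lam 2 \<ge> lam 4"
    "lam 1 = lam 4 \<longrightarrow> lam 2 \<ge> lam 3"
    using assms(6) unfolding boards_bar_def lam_def Let_def by auto
  have memK: "g \<in> K \<longleftrightarrow> (\<forall>i\<in>{1,2,3,4}. lam (perm g i) = lam i)" for g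
    unfolding K_def using stab_iff[OF Bb] by blast
  have R0K: "R0 \<in> K" using memK by simp
  have HK: "H \<in> K \<longleftrightarrow> lam 1 = lam 4 \<and> lam 2 = lam 3" using memK[of H] by auto
  have VK: "V \<in> K \<longleftrightarrow> lam 1 = lam 2 \<and> lam 3 = lam 4" using memK[of V] by auto
  have RK: "R180 \<in> K \<longleftrightarrow> lam 1 = lam 3 \<and> lam 2 = lam 4" using memK[of R180] by auto
  have Keq: "K = {g. g = R0 \<or> (g = H \<and> H \<in> K) \<or> (g = V \<and> V \<in> K) \<or> (g = R180 \<and> R180 \<in> K)}"
    using R0K sym.exhaust by auto
  have c4: "card (UNIV :: sym set) = 4" unfolding UNIV_sym by simp
  have idx: "hv_index K = 4 div card K" unfolding hv_index_def c4 by simp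
  have K4: "K = {R0, H, V, R180}" if "H \<in> K" "V \<in> K" "R180 \<in> K"
    using Keq that by auto
  have KV: "K = {R0, V}" if "H \<notin> K" "V \<in> K" "R180 \<notin> K"
    using Keq that by auto
  have KR: "K = {R0, R180}" if "H \<notin> K" "V \<notin> K" "R180 \<in> K"
    using Keq that by auto
  have KH: "K = {R0, H}" if "H \<in> K" "V \<notin> K" "R180 \<notin> K"
    using Keq that by auto
  have K1: "K = {R0}" if "H \<notin> K" "V \<notin> K" "R180 \<notin> K"
    using Keq that by auto
  show ?thesis
  proof (intro conjI impI)
    assume a: "lam 1 = lam 2 \<and> lam 2 = lam 3 \<and> lam 3 = lam 4"
    then have e: "K = {R0, H, V, R180}" using K4 HK VK RK by simp
    then show "K = {R0, H, V, R180}" .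
    show "hv_index K = 1" unfolding e hvv by (rule refl)
  next
    assume a: "lam 1 = lam 2 \<and> lam 2 > lam 3 \<and> lam 3 = lam 4"
    then have e: "K = {R0, V}" using KV HK VK RK by simp
    then show "K = {R0, V}" .
    show "hv_index K = 2" unfolding e hvv by (rule refl)
  next
    assume a: "lam 1 = lam 3 \<and> lam 3 > lam 2 \<and> lam 2 = lam 4"
    then have e: "K = {R0, R180}" using KR HK VK RK by simp
    then show "K = {R0, R180}" .
    show "hv_index K = 2" unfolding e hvv by (rule refl)
  next
    assume a: "lam 1 = lam 4 \<and> lam 4 > lam 2 \<and> lam 2 = lam 3"
    then have e: "K = {R0, H}" using KH HK VK RK by simp
    then show "K = {R0, H}" .
    show "hv_index K = 2" unfolding e hvv by (rule refl)
  next
    assume a: "\<not> (lam 1 = lam 2 \<and> lam 2 = lam 3 \<and> lam 3 = lam 4)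
          \<and> \<not> (lam 1 = lam 2 \<and> lam 2 > lam 3 \<and> lam 3 = lam 4)
          \<and> \<not> (lam 1 = lam 3 \<and> lam 3 > lam 2 \<and> lam 2 = lam 4)
          \<and> \<not> (lam 1 = lam 4 \<and> lam 4 > lam 2 \<and> lam 2 = lam 3)"
    have "H \<notin> K" unfolding HK using a c by linarith
    moreover have "V \<notin> K" unfolding VK using a c by linarith
    moreover have "R180 \<notin> K" unfolding RK using a c by linarith
    ultimately have e: "K = {R0}" using K1 by simp
    then show "K = {R0}" .
    show "hv_index K = 4" unfolding e hvv by (rule refl)
  qed
qed

end
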